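(* Let $\Xi>1$, $\rho:[1,\Xi]\to\mathbb{R}$ continuous, $Z>0$ and $c>-1$, and define for integers $l\geq 0$ \[ \rho_l:=\frac{\delta_{l,0}}{\sqrt{Z}}-\frac12\int_1^\Xi\frac{dT\,\rho(T)}{\sqrt{T+c}^{\,3+2l}}, \] assuming $\rho_0\neq 0$. For integers $B\geq 3$ and $0\le M\le B-3$ define \[ \gamma^M_B:=\frac{1}{\rho_0^{B-3}}\sum_{K=0}^{B-3-M}\frac{(B-3+K)!}{(B-3-M)!\,M!}\,B_{B-3-M,K}\Big(\Big\{-\frac{(2r+1)!!\,\rho_r}{(r+1)\rho_0}\Big\}_{r=1}^{B-2-M-K}\Big), \] and set $\gamma^M_B:=0$ for $M<0$ or $M>B-3$. Then $\gamma^M_3=\delta_{M,0}$, and for all $B\geq 4$ and $0\le M\le B-3$: \[ \sum_{j=0}^{B-3-M}\binom{M+j}{j}(2j+1)!!\,\rho_j\,\gamma^{M+j}_B=\gamma^{M-1}_{B-1}, \qquad \sum_{j=0}^{B-4-M}\binom{M+1+j}{j+1}(2j+3)!!\,\rho_j\,\gamma^{M+1+j}_B=(2M+B-1)\,\gamma^M_{B-1}. \] Moreover, $(\gamma^M_B)$ is the unique family of numbers with $\gamma^M_3=\delta_{M,0}$ satisfying the first of these equations for all $B\geq4$, $0\le M\le B-3$.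
   Context: Bell polynomials: $B_{0,k}(\{\})=\delta_{k,0}$, and for $n\geq1$, $B_{n,k}(x_1,\dots,x_{n-k+1})=\sum\frac{n!}{j_1!j_2!\cdots j_{n-k+1}!}\big(\frac{x_1}{1!}\big)^{j_1}\cdots\big(\frac{x_{n-k+1}}{(n-k+1)!}\big)^{j_{n-k+1}}$, the sum over nonnegative integers with $j_1+\dots+j_{n-k+1}=k$ and $1j_1+2j_2+\dots+(n-k+1)j_{n-k+1}=n$ (so $B_{n,0}=0$ for $n\ge1$). $(2j+1)!!=1\cdot3\cdots(2j+1)$, with $(-1)!!=1$. *)

theory Defs
  imports "HOL-Analysis.Analysis"
begin

text \<open>Partial Bell polynomial B_{n,k}(x_1,...,x_{n-k+1}); the variables are given as a
  function x :: nat => real, of which only x 1, ..., x (n-k+1) are used.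
  Convention: B_{0,k} = delta_{k,0}; for n >= 1 the defining sum (empty when k = 0);
  B_{n,k} = 0 for k > n (never used in the statement).\<close>
definition bell_poly :: "nat \<Rightarrow> nat \<Rightarrow> (nat \<Rightarrow> real) \<Rightarrow> real" where
  "bell_poly n k x =
     (if n = 0 then (if k = 0 then 1 else 0)
      else if k > n then 0
      else (\<Sum>j\<in>{j \<in> {1..n-k+1} \<rightarrow>\<^sub>E {0..k}.
                  (\<Sum>i\<in>{1..n-k+1}. j i) = k \<and> (\<Sum>i\<in>{1..n-k+1}. i * j i) = n}.
              fact n / (\<Prod>i\<in>{1..n-k+1}. fact (j i))
              * (\<Prod>i\<in>{1..n-k+1}. (x i / fact i) ^ (j i))))"

definition odd_dfact :: "nat \<Rightarrow> real" where
  "odd_dfact j = (\<Prod>i\<in>{0..j}. real (2 * i + 1))"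

definition rho_l :: "real \<Rightarrow> real \<Rightarrow> real \<Rightarrow> (real \<Rightarrow> real) \<Rightarrow> nat \<Rightarrow> real" where
  "rho_l Z c Xi \<rho> l =
     (if l = 0 then 1 / sqrt Z else 0)
     - 1/2 * integral {1..Xi} (\<lambda>T. \<rho> T / sqrt (T + c) ^ (3 + 2 * l))"

definition gamma :: "(nat \<Rightarrow> real) \<Rightarrow> nat \<Rightarrow> int \<Rightarrow> real" where
  "gamma r B M =
     (if M < 0 \<or> M > int B - 3 then 0
      else let m = nat M in
        1 / r 0 ^ (B - 3) *
        (\<Sum>K = 0..B-3-m.
           fact (B - 3 + K) / (fact (B - 3 - m) * fact m)
           * bell_poly (B - 3 - m) K (\<lambda>s. - odd_dfact s * r s / (real (s + 1) * r 0))))"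

end

theory Submission
  imports Defs "HOL-Computational_Algebra.Formal_Power_Series"
begin

unbundle no vec_syntax
notation fps_nth (infixl \<open>$\<close> 75)



definition GA :: "nat set \<Rightarrow> (nat \<Rightarrow> real) \<Rightarrow> real fps" where
  "GA A c = Abs_fps (\<lambda>i. if i \<in> A then c i else 0)"

definition SS :: "nat \<Rightarrow> nat set \<Rightarrow> (nat \<Rightarrow> real) \<Rightarrow> nat \<Rightarrow> nat \<Rightarrow> real" where
  "SS b A c k n = (\<Sum>j\<in>{j \<in> A \<rightarrow>\<^sub>E {0..b}. (\<Sum>i\<in>A. j i) = k \<and> (\<Sum>i\<in>A. i * j i) = n}.
      \<Prod>i\<in>A. c i ^ j i / fact (j i))"

lemma SS_insert:
  assumes fin: "finite A" and aA: "a \<notin> A" and kb: "k \<le> b"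
  shows "SS b (insert a A) c k n =
    (\<Sum>m=0..k. if a*m \<le> n then c a ^ m / fact m * SS b A c (k-m) (n-a*m) else 0)"
proof -
  let ?P = "\<lambda>j. (\<Sum>i\<in>insert a A. j i) = k \<and> (\<Sum>i\<in>insert a A. i * j i) = n"
  let ?F = "\<lambda>j. \<Prod>i\<in>insert a A. c i ^ j i / fact (j i)"
  have "SS b (insert a A) c k n = (\<Sum>j\<in>insert a A \<rightarrow>\<^sub>E {0..b}. if ?P j then ?F j else 0)"
    unfolding SS_def using fin by (simp add: sum.inter_filter[symmetric] finite_PiE)
  also have "\<dots> = (\<Sum>(y,g)\<in>{0..b} \<times> (A \<rightarrow>\<^sub>E {0..b}). if ?P (g(a:=y)) then ?F (g(a:=y)) else 0)"
    by (subst PiE_insert_eq, subst sum.reindex[OF inj_combinator[OF aA]])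
       (simp add: case_prod_unfold comp_def)
  also have "\<dots> = (\<Sum>y\<in>{0..b}. \<Sum>g\<in>A \<rightarrow>\<^sub>E {0..b}. if ?P (g(a:=y)) then ?F (g(a:=y)) else 0)"
    by (simp add: sum.cartesian_product)
  also have "\<dots> = (\<Sum>y\<in>{0..b}. if y \<le> k \<and> a*y \<le> n then c a ^ y / fact y * SS b A c (k-y) (n-a*y) else 0)"
  proof (rule sum.cong[OF refl])
    fix y assume "y \<in> {0..b}"
    have s1: "(\<Sum>i\<in>insert a A. (g(a:=y)) i) = y + sum g A" for g :: "nat \<Rightarrow> nat"
      using fin aA by (simp add: sum.insert) (intro sum.cong, auto)
    have s2: "(\<Sum>i\<in>insert a A. i * (g(a:=y)) i) = a*y + (\<Sum>i\<in>A. i * g i)" for g :: "nat \<Rightarrow> nat"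
      using fin aA by (simp add: sum.insert) (intro sum.cong, auto)
    have s3: "?F (g(a:=y)) = c a ^ y / fact y * (\<Prod>i\<in>A. c i ^ g i / fact (g i))" for g :: "nat \<Rightarrow> nat"
    proof -
      have "(\<Prod>i\<in>A. c i ^ (g(a:=y)) i / fact ((g(a:=y)) i)) = (\<Prod>i\<in>A. c i ^ g i / fact (g i))"
        using aA by (intro prod.cong) auto
      then show ?thesis by (subst prod.insert[OF fin aA]) (simp only: fun_upd_same)
    qed
    show "(\<Sum>g\<in>A \<rightarrow>\<^sub>E {0..b}. if ?P (g(a:=y)) then ?F (g(a:=y)) else 0) =
      (if y \<le> k \<and> a*y \<le> n then c a ^ y / fact y * SS b A c (k-y) (n-a*y) else 0)"
    proof (cases "y \<le> k \<and> a*y \<le> n")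
      case True
      have "(\<Sum>g\<in>A \<rightarrow>\<^sub>E {0..b}. if ?P (g(a:=y)) then ?F (g(a:=y)) else 0)
          = (\<Sum>g\<in>A \<rightarrow>\<^sub>E {0..b}. if sum g A = k - y \<and> (\<Sum>i\<in>A. i * g i) = n - a*y
               then c a ^ y / fact y * (\<Prod>i\<in>A. c i ^ g i / fact (g i)) else 0)"
        using True by (intro sum.cong refl) (simp only: s1 s2 s3, auto)
      also have "\<dots> = c a ^ y / fact y * SS b A c (k-y) (n-a*y)"
        unfolding SS_def using fin
        by (simp add: sum.inter_filter[symmetric] finite_PiE sum_distrib_left if_distrib cong: if_cong)
      finally show ?thesis using True by simp
    next
      case False
      show ?thesis using False by (intro trans[OF sum.neutral]) (auto simp only: s1 s2 s3 split: if_splits)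
    qed
  qed
  also have "\<dots> = (\<Sum>m=0..k. if a*m \<le> n then c a ^ m / fact m * SS b A c (k-m) (n-a*m) else 0)"
  proof -
    have "(\<Sum>y\<in>{0..b}. if y \<le> k \<and> a*y \<le> n then c a ^ y / fact y * SS b A c (k-y) (n-a*y) else 0)
       = (\<Sum>y\<in>{0..k}. if y \<le> k \<and> a*y \<le> n then c a ^ y / fact y * SS b A c (k-y) (n-a*y) else 0)"
      using kb by (intro sum.mono_neutral_right) auto
    then show ?thesis by simp
  qed
  finally show ?thesis .
qed

lemma GA_empty: "GA {} c = 0"
  by (simp add: GA_def fps_eq_iff)

lemma SS_empty: "SS b {} c k n = (if k = 0 \<and> n = 0 then 1 else 0)"
  by (simp add: SS_def)

lemma GA_insert: "a \<notin> A \<Longrightarrow> GA (insert a A) c = fps_const (c a) * fps_X ^ a + GA A c"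
  by (auto simp add: fps_eq_iff GA_def)

lemma multinom:
  assumes "finite A"
  shows "\<forall>k n. k \<le> b \<longrightarrow> (GA A c ^ k) $ n = fact k * SS b A c k n"
  using assms
proof (induction A rule: finite_induct)
  case empty
  show ?case by (auto simp: GA_empty SS_empty power_0_left)
next
  case (insert a A)
  show ?case
  proof (intro allI impI)
    fix k n assume kb: "k \<le> b"
    have "(GA (insert a A) c ^ k) $ n = (\<Sum>m=0..k. of_nat (k choose m) * (fps_const (c a) * fps_X ^ a)^m * GA A c ^(k-m)) $ n"
      by (simp only: GA_insert[OF insert(2)] binomial_ring atLeast0AtMost)
    also have "\<dots> = (\<Sum>m=0..k. of_nat (k choose m) * c a ^ m * (if a*m \<le> n then (GA A c ^(k-m)) $ (n - a*m) else 0))"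
      unfolding fps_sum_nth
    proof (intro sum.cong refl)
      fix m
      have e1: "(fps_const (c a) * fps_X ^ a)^m = fps_const (c a ^ m) * fps_X^(a*m)"
        by (simp add: power_mult_distrib power_mult)
      have e2: "(of_nat (k choose m) :: real fps) = fps_const (of_nat (k choose m))"
        by (simp add: fps_of_nat)
      then show "(of_nat (k choose m) * (fps_const (c a) * fps_X ^ a)^m * GA A c ^(k-m)) $ n =
          of_nat (k choose m) * c a ^ m * (if a*m \<le> n then (GA A c ^(k-m)) $ (n - a*m) else 0)"
        by (simp only: e1 e2 mult.assoc fps_mult_left_const_nth fps_X_power_mult_nth) auto
    qed
    also have "\<dots> = (\<Sum>m=0..k. of_nat (k choose m) * c a ^ m * (if a*m \<le> n then fact (k-m) * SS b A c (k-m) (n-a*m) else 0))"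
      using insert.IH kb by (intro sum.cong refl) auto
    also have "\<dots> = fact k * (\<Sum>m=0..k. if a*m \<le> n then c a ^ m / fact m * SS b A c (k-m) (n-a*m) else 0)"
      unfolding sum_distrib_left
    proof (intro sum.cong refl)
      fix m assume "m \<in> {0..k}"
      then have "real (k choose m) = fact k / (fact m * fact (k-m))" by (simp add: binomial_fact)
      then show "of_nat (k choose m) * c a ^ m * (if a*m \<le> n then fact (k-m) * SS b A c (k-m) (n-a*m) else 0)
        = fact k * (if a*m \<le> n then c a ^ m / fact m * SS b A c (k-m) (n-a*m) else 0)"
        by (simp add: field_simps)
    qed
    also have "\<dots> = fact k * SS b (insert a A) c k n"
      using SS_insert[OF insert(1,2) kb] by simp
    finally show "(GA (insert a A) c ^ k) $ n = fact k * SS b (insert a A) c k n" .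
  qed
qed

lemma pow_nth_low: "F $ 0 = (0::real) \<Longrightarrow> m < k \<Longrightarrow> (F ^ k) $ m = 0"
proof (induction k arbitrary: m)
  case 0 then show ?case by simp
next
  case (Suc k)
  have "(F ^ Suc k) $ m = (\<Sum>i=0..m. F$i * (F^k)$(m-i))" by (simp add: fps_mult_nth)
  also have "\<dots> = 0"
  proof (intro sum.neutral ballI)
    fix i assume "i \<in> {0..m}"
    show "F$i * (F^k)$(m-i) = 0"
    proof (cases "i = 0")
      case True then show ?thesis using Suc by simp
    next
      case False
      then have "m - i < k" using Suc.prems \<open>i \<in> {0..m}\<close> by auto
      then show ?thesis using Suc.IH Suc.prems by simp
    qed
  qed
  finally show ?case .
qed

lemma pow_nth_trunc:
  assumes "F$0 = (0::real)" "G$0 = 0" "\<forall>i\<le>L. F$i = G$i"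
  shows "n < L + k \<Longrightarrow> (F^k)$n = (G^k)$n"
proof (induction k arbitrary: n)
  case 0 then show ?case by simp
next
  case (Suc k)
  have "(F ^ Suc k) $ n = (\<Sum>i=0..n. F$i * (F^k)$(n-i))" by (simp add: fps_mult_nth)
  also have "\<dots> = (\<Sum>i=0..n. G$i * (G^k)$(n-i))"
  proof (intro sum.cong refl)
    fix i assume "i \<in> {0..n}"
    show "F$i * (F^k)$(n-i) = G$i * (G^k)$(n-i)"
    proof (cases "i = 0")
      case True then show ?thesis using assms by simp
    next
      case False
      show ?thesis
      proof (cases "i \<le> L")
        case True
        then show ?thesis using assms Suc False by simp
      next
        case False
        then have "n - i < k" using Suc \<open>i \<in> {0..n}\<close> by auto
        then show ?thesis using pow_nth_low[of F] pow_nth_low[of G] assms by simp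
      qed
    qed
  qed
  also have "\<dots> = (G ^ Suc k) $ n" by (simp add: fps_mult_nth)
  finally show ?case .
qed

definition HH :: "(nat \<Rightarrow> real) \<Rightarrow> real fps" where
  "HH x = Abs_fps (\<lambda>i. if i = 0 then 0 else x i / fact i)"

lemma bell_fps:
  assumes kn: "k \<le> n"
  shows "bell_poly n k x = fact n / fact k * (HH x ^ k) $ n"
proof (cases "n = 0")
  case True then show ?thesis using kn by (simp add: bell_poly_def)
next
  case False
  define L where "L = n - k + 1"
  define c where "c = (\<lambda>i. x i / fact i :: real)"
  have "bell_poly n k x = (\<Sum>j\<in>{j \<in> {1..L} \<rightarrow>\<^sub>E {0..k}.
                  (\<Sum>i\<in>{1..L}. j i) = k \<and> (\<Sum>i\<in>{1..L}. i * j i) = n}.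
              fact n / (\<Prod>i\<in>{1..L}. fact (j i))
              * (\<Prod>i\<in>{1..L}. (x i / fact i) ^ (j i)))"
    using False kn by (simp add: bell_poly_def L_def)
  also have "\<dots> = fact n * SS k {1..L} c k n"
    unfolding SS_def sum_distrib_left
    by (intro sum.cong refl) (simp add: c_def prod_dividef power_divide prod.distrib mult.commute)
  also have "SS k {1..L} c k n = (GA {1..L} c ^ k) $ n / fact k"
    using multinom[of "{1..L}" k c] by simp
  also have "(GA {1..L} c ^ k) $ n = (HH x ^ k) $ n"
    by (rule pow_nth_trunc[where L = L]) (auto simp: GA_def HH_def c_def L_def)
  finally show ?thesis by simp
qed



definition HR :: "(nat \<Rightarrow> real) \<Rightarrow> real fps" where
  "HR r = HH (\<lambda>s. - odd_dfact s * r s / (real (s + 1) * r 0))"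

definition AA :: "nat \<Rightarrow> real fps" where
  "AA N = Abs_fps (\<lambda>K. of_nat ((N+K) choose K))"

definition EE :: "(nat \<Rightarrow> real) \<Rightarrow> nat \<Rightarrow> real fps" where
  "EE r N = AA N oo HR r"

lemma HR0: "HR r $ 0 = 0" by (simp add: HR_def HH_def)

lemma EE_nth: "EE r N $ n = (\<Sum>K=0..n. of_nat ((N+K) choose K) * (HR r ^ K) $ n)"
  by (simp add: EE_def AA_def fps_compose_nth)

lemma gamma_E:
  assumes r0: "r 0 \<noteq> 0" and mN: "m \<le> N"
  shows "gamma r (N+3) (int m) = fact N / (r 0 ^ N * fact m) * EE r N $ (N - m)"
proof -
  have "gamma r (N+3) (int m) = 1 / r 0 ^ N *
        (\<Sum>K = 0..N-m. fact (N + K) / (fact (N - m) * fact m)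
           * bell_poly (N - m) K (\<lambda>s. - odd_dfact s * r s / (real (s + 1) * r 0)))"
    using mN by (simp add: gamma_def)
  also have "\<dots> = fact N / (r 0 ^ N * fact m) * (\<Sum>K=0..N-m. of_nat ((N+K) choose K) * (HR r ^ K) $ (N-m))"
    unfolding sum_distrib_left
  proof (intro sum.cong refl)
    fix K assume K: "K \<in> {0..N-m}"
    have b: "real ((N+K) choose K) = fact (N+K) / (fact K * fact N)"
      by (simp add: binomial_fact)
    have b2: "fact (K+N) = fact K * (fact N * real ((K+N) choose K))" using b by (simp add: add.commute)
    show "1 / r 0 ^ N * (fact (N + K) / (fact (N - m) * fact m)
           * bell_poly (N - m) K (\<lambda>s. - odd_dfact s * r s / (real (s + 1) * r 0)))
        = fact N / (r 0 ^ N * fact m) * (of_nat ((N+K) choose K) * (HR r ^ K) $ (N-m))"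
      using K r0 by (simp add: bell_fps HR_def b2 field_simps)
  qed
  finally show ?thesis by (simp add: EE_nth)
qed

lemma binom_aux_nat: "Suc K * ((N + K + 1) choose Suc K) = Suc N * ((Suc N + K) choose K)"
  by (metis Suc_times_binomial_add add.assoc add.commute plus_1_eq_Suc)

lemma binom_aux: "real (n+1) * real ((N + (n+1)) choose (n+1)) = real (Suc N) * real ((Suc N + n) choose n)"
proof -
  have "(n+1) * ((N + (n+1)) choose (n+1)) = Suc N * ((Suc N + n) choose n)"
    using binom_aux_nat[of n N] by (simp add: add.assoc)
  then show ?thesis by (metis of_nat_mult)
qed

lemma pascal_aux: "real ((Suc N + Suc K) choose Suc K) - real ((Suc N + K) choose K) = real ((N + Suc K) choose Suc K)"
proof -
  have "(Suc N + Suc K) choose Suc K = ((Suc N + K) choose K) + ((N + Suc K) choose Suc K)"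
    using binomial_Suc_Suc[of "N + Suc K" K] by simp
  then show ?thesis by simp
qed

lemma AA_mult: "AA (Suc N) * (1 - fps_X) = AA N"
proof (rule fps_ext)
  fix K
  have e: "AA (Suc N) * (1 - fps_X) = AA (Suc N) - AA (Suc N) * fps_X" by (simp add: algebra_simps)
  show "(AA (Suc N) * (1 - fps_X)) $ K = AA N $ K"
  proof (cases K)
    case 0 then show ?thesis by (simp add: e AA_def)
  next
    case (Suc K')
    have "(AA (Suc N) * (1 - fps_X)) $ K = AA (Suc N) $ Suc K' - AA (Suc N) $ K'"
      by (simp add: e Suc)
    then show ?thesis using pascal_aux[of N K'] by (simp add: AA_def Suc)
  qed
qed

lemma AA_deriv: "fps_deriv (AA N) = fps_const (real (Suc N)) * AA (Suc N)"
  by (rule fps_ext) (simp only: fps_deriv_nth AA_def fps_nth_Abs_fps fps_mult_left_const_nth binom_aux)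

lemma EE_mult: "EE r (Suc N) * (1 - HR r) = EE r N"
proof -
  have "(AA (Suc N) * (1 - fps_X)) oo HR r = EE r (Suc N) * ((1 - fps_X) oo HR r)"
    by (simp add: fps_compose_mult_distrib[OF HR0] EE_def)
  also have "(1 - fps_X) oo HR r = 1 - HR r"
    by (simp add: fps_compose_sub_distrib HR0)
  finally show ?thesis by (simp add: AA_mult EE_def)
qed

lemma EE_deriv: "fps_deriv (EE r N) = fps_const (real (Suc N)) * EE r (Suc N) * fps_deriv (HR r)"
  by (simp add: EE_def fps_compose_deriv[OF HR0] AA_deriv fps_compose_mult_distrib[OF HR0])



lemma odd_dfact_0[simp]: "odd_dfact 0 = 1" by (simp add: odd_dfact_def)
lemma odd_dfact_Suc: "odd_dfact (Suc j) = real (2 * j + 3) * odd_dfact j"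
  by (simp add: odd_dfact_def)

lemma UU_nth:
  assumes r0: "r 0 \<noteq> 0"
  shows "(1 - HR r) $ j = odd_dfact j * r j / (r 0 * fact (Suc j))"
proof (cases j)
  case 0 then show ?thesis using r0 by (simp add: HR_def HH_def)
next
  case (Suc j')
  then show ?thesis using r0 by (simp add: HR_def HH_def fact_Suc field_simps)
qed

definition QQ :: "(nat \<Rightarrow> real) \<Rightarrow> real fps" where
  "QQ r = Abs_fps (\<lambda>j. odd_dfact j * r j / (r 0 * fact j))"

lemma QQ_eq:
  assumes r0: "r 0 \<noteq> 0"
  shows "QQ r = (1 - HR r) + fps_X * fps_deriv (1 - HR r)"
proof (rule fps_ext)
  fix j
  show "QQ r $ j = ((1 - HR r) + fps_X * fps_deriv (1 - HR r)) $ j"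
  proof (cases j)
    case 0 then show ?thesis using r0 by (simp add: QQ_def HR_def HH_def)
  next
    case (Suc j')
    have "((1 - HR r) + fps_X * fps_deriv (1 - HR r)) $ j = (1 - HR r) $ j + real j * (1 - HR r) $ j"
      by (simp only: fps_add_nth fps_X_mult_nth fps_deriv_nth Suc) (simp del: fps_sub_nth)
    also have "\<dots> = odd_dfact j * r j / (r 0 * fact j)"
    proof -
      have fs: "fact (Suc j) = (1 + real j) * (fact j :: real)" by (simp add: fact_Suc)
      have nz: "(1 + real j) \<noteq> 0" "fact j \<noteq> (0::real)" by auto
      have g: "x + real j * x = a / (r 0 * fact j)" if "x = a / (r 0 * ((1 + real j) * fact j))" for x a
        using that r0 nz by (simp add: divide_simps) (simp add: algebra_simps)
      show ?thesis unfolding UU_nth[of r, OF r0] fs by (rule g) simp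
    qed
    finally show ?thesis by (simp add: QQ_def)
  qed
qed

lemma K1:
  assumes r0: "r 0 \<noteq> 0"
  shows "real (Suc N) * (QQ r * EE r (Suc N)) $ n = (real (Suc N) - real n) * EE r N $ n"
proof -
  let ?c = "fps_const (real (Suc N))"
  let ?U = "1 - HR r"
  have h1: "?U * EE r (Suc N) = EE r N" using EE_mult[of r N] by (simp add: mult.commute)
  have h3: "fps_deriv ?U = - fps_deriv (HR r)" by simp
  have "?c * (QQ r * EE r (Suc N)) = ?c * (?U * EE r (Suc N)) + fps_X * (?c * fps_deriv ?U * EE r (Suc N))"
    by (simp add: QQ_eq[of r, OF r0] algebra_simps)
  also have "\<dots> = ?c * EE r N - fps_X * fps_deriv (EE r N)"
    by (simp only: h1 h3 EE_deriv) (simp add: algebra_simps)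
  finally have e: "?c * (QQ r * EE r (Suc N)) = ?c * EE r N - fps_X * fps_deriv (EE r N)" .
  have "(?c * (QQ r * EE r (Suc N))) $ n = (?c * EE r N - fps_X * fps_deriv (EE r N)) $ n"
    by (simp only: e)
  moreover have l: "(?c * (QQ r * EE r (Suc N))) $ n = real (Suc N) * (QQ r * EE r (Suc N)) $ n"
    by (rule fps_mult_left_const_nth)
  moreover have rr: "(?c * EE r N - fps_X * fps_deriv (EE r N)) $ n = (real (Suc N) - real n) * EE r N $ n"
    by (cases n) (simp_all add: algebra_simps)
  ultimately show ?thesis by simp
qed



lemma sum1:
  assumes r0: "r 0 \<noteq> 0" and MN: "M \<le> N"
  shows "(\<Sum>j = 0..N-M. real ((M + j) choose j) * odd_dfact j * r j * gamma r (N+3) (int (M + j)))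
     = fact N / (r 0 ^ N * fact M) * r 0 * (QQ r * EE r N) $ (N-M)"
  unfolding fps_mult_nth sum_distrib_left
proof (intro sum.cong refl)
  fix j assume j: "j \<in> {0..N-M}"
  have g: "gamma r (N+3) (int (M+j)) = fact N / (r 0 ^ N * fact (M+j)) * EE r N $ (N - M - j)"
    using gamma_E[of r "M+j" N, OF r0] j MN by (simp add: diff_diff_add)
  have b: "real ((M + j) choose j) = fact (M+j) / (fact j * fact M)"
    by (simp add: binomial_fact)
  have nz: "fact (M+j) \<noteq> (0::real)" "fact j \<noteq> (0::real)" "fact M \<noteq> (0::real)" by auto
  show "real ((M + j) choose j) * odd_dfact j * r j * gamma r (N+3) (int (M + j))
     = fact N / (r 0 ^ N * fact M) * r 0 * (QQ r $ j * EE r N $ (N - M - j))"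
    unfolding g b QQ_def fps_nth_Abs_fps using r0 nz by (simp add: field_simps)
qed

lemma sum2:
  assumes r0: "r 0 \<noteq> 0" and nM: "N - M = Suc n"
  shows "(\<Sum>j = 0..<N-M. real ((M + 1 + j) choose (j + 1)) * odd_dfact (j + 1) * r j
              * gamma r (N+3) (int (M + 1 + j)))
     = fact N / (r 0 ^ N * fact M) * r 0 * (2 * (QQ r * EE r N) $ n + ((1 - HR r) * EE r N) $ n)"
proof -
  have "(\<Sum>j = 0..<N-M. real ((M + 1 + j) choose (j + 1)) * odd_dfact (j + 1) * r j
              * gamma r (N+3) (int (M + 1 + j)))
     = (\<Sum>j = 0..n. fact N / (r 0 ^ N * fact M) * r 0 * (2 * (QQ r $ j * EE r N $ (n - j))
          + (1 - HR r) $ j * EE r N $ (n - j)))"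
    unfolding nM atLeastLessThanSuc_atLeastAtMost
  proof (intro sum.cong refl)
    fix j assume j: "j \<in> {0..n}"
    have g: "gamma r (N+3) (int (M+1+j)) = fact N / (r 0 ^ N * fact (M+1+j)) * EE r N $ (n - j)"
    proof -
      have "M+1+j \<le> N" "N - (M+1+j) = n - j" using nM j by auto
      then show ?thesis using gamma_E[of r "M+1+j" N, OF r0] by simp
    qed
    have b: "real ((M + 1 + j) choose (j + 1)) = fact (M+1+j) / (fact (j+1) * fact M)"
      by (subst binomial_fact) simp_all
    have fs: "fact (Suc j) = (1 + real j) * (fact j :: real)" by (simp add: fact_Suc)
    have nz: "fact (M+1+j) \<noteq> (0::real)" "fact j \<noteq> (0::real)" "fact M \<noteq> (0::real)" "1 + real j \<noteq> 0" by auto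
    show "real ((M + 1 + j) choose (j + 1)) * odd_dfact (j + 1) * r j * gamma r (N+3) (int (M + 1 + j))
       = fact N / (r 0 ^ N * fact M) * r 0 * (2 * (QQ r $ j * EE r N $ (n - j))
          + (1 - HR r) $ j * EE r N $ (n - j))"
    proof -
      have od: "odd_dfact (j+1) = real (2*j+3) * odd_dfact j" using odd_dfact_Suc[of j] by simp
      have f1: "fact (j+1) = (1 + real j) * (fact j :: real)" by (simp add: fact_Suc)
      have u: "(1 - HR r) $ j = odd_dfact j * r j / (r 0 * ((1 + real j) * fact j))"
        using UU_nth[of r j, OF r0] fs by simp
      show ?thesis
        unfolding g b QQ_def fps_nth_Abs_fps u od f1
        using r0 nz by (simp add: divide_simps) (simp add: algebra_simps)
    qed
  qed
  also have "\<dots> = fact N / (r 0 ^ N * fact M) * r 0 * (2 * (QQ r * EE r N) $ n + ((1 - HR r) * EE r N) $ n)"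
    unfolding fps_mult_nth sum_distrib_left sum.distrib[symmetric] by (simp add: algebra_simps)
  finally show ?thesis .
qed



lemma main_ids:
  assumes r0: "r 0 \<noteq> 0" and B4: "B \<ge> 4" and MB: "M \<le> B - 3"
  shows "(\<Sum>j = 0..B-3-M. real ((M + j) choose j) * odd_dfact j * r j * gamma r B (int (M + j)))
            = gamma r (B - 1) (int M - 1)
        \<and> (\<Sum>j = 0..<B-3-M. real ((M + 1 + j) choose (j + 1)) * odd_dfact (j + 1) * r j
              * gamma r B (int (M + 1 + j)))
            = real (2 * M + B - 1) * gamma r (B - 1) (int M)"
proof -
  define N' where "N' = B - 4"
  have BN: "B = Suc N' + 3" using B4 by (simp add: N'_def)
  have MN: "M \<le> Suc N'" using MB BN by simp
  have B3: "B - 3 - M = Suc N' - M" using BN by simp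
  have B1: "B - 1 = N' + 3" using BN by simp
  have K1n: "real (Suc N') * (QQ r * EE r (Suc N')) $ n = (real (Suc N') - real n) * EE r N' $ n" for n
    using K1[of r N' n, OF r0] .
  have nzf: "fact k \<noteq> (0::real)" for k by simp
  have A: "(\<Sum>j = 0..B-3-M. real ((M + j) choose j) * odd_dfact j * r j * gamma r B (int (M + j)))
            = gamma r (B - 1) (int M - 1)"
  proof -
    have S: "(\<Sum>j = 0..B-3-M. real ((M + j) choose j) * odd_dfact j * r j * gamma r B (int (M + j)))
      = fact (Suc N') / (r 0 ^ Suc N' * fact M) * r 0 * (QQ r * EE r (Suc N')) $ (Suc N' - M)"
      unfolding B3 unfolding BN by (rule sum1[of r, OF r0 MN])
    show ?thesis
    proof (cases M)
      case 0
      have "(QQ r * EE r (Suc N')) $ (Suc N' - M) = 0"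
        using K1n[of "Suc N'"] 0 by simp
      moreover have "gamma r (B - 1) (int M - 1) = 0" using 0 by (simp add: gamma_def)
      ultimately show ?thesis using S by simp
    next
      case (Suc M')
      have M'N: "M' \<le> N'" using MN Suc by simp
      have R: "gamma r (B - 1) (int M - 1) = fact N' / (r 0 ^ N' * fact M') * EE r N' $ (N' - M')"
        using gamma_E[of r M' N', OF r0 M'N] B1 Suc by simp
      have q: "real (Suc N') * (QQ r * EE r (Suc N')) $ (N' - M') = real (Suc M') * EE r N' $ (N' - M')"
        using K1n[of "N' - M'"] M'N by (simp add: of_nat_diff)
      have q': "(QQ r * EE r (Suc N')) $ (N' - M') = real (Suc M') * EE r N' $ (N' - M') / real (Suc N')"
        using q by (simp add: field_simps del: of_nat_Suc)
      show ?thesis unfolding S R using Suc q' r0 nzf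
        by (simp add: fact_Suc divide_simps del: of_nat_Suc) (simp add: algebra_simps)
    qed
  qed
  have Bp: "(\<Sum>j = 0..<B-3-M. real ((M + 1 + j) choose (j + 1)) * odd_dfact (j + 1) * r j
              * gamma r B (int (M + 1 + j)))
            = real (2 * M + B - 1) * gamma r (B - 1) (int M)"
  proof (cases "M = Suc N'")
    case True
    have "gamma r (B - 1) (int M) = 0" using True B1 by (simp add: gamma_def)
    then show ?thesis using True B3 by simp
  next
    case False
    define n where "n = N' - M"
    have nM: "Suc N' - M = Suc n" using False MN by (simp add: n_def)
    have S: "(\<Sum>j = 0..<B-3-M. real ((M + 1 + j) choose (j + 1)) * odd_dfact (j + 1) * r j
              * gamma r B (int (M + 1 + j)))
       = fact (Suc N') / (r 0 ^ Suc N' * fact M) * r 0 * (2 * (QQ r * EE r (Suc N')) $ n + ((1 - HR r) * EE r (Suc N')) $ n)"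
      unfolding B3 unfolding BN by (rule sum2[of r, OF r0 nM])
    have u: "((1 - HR r) * EE r (Suc N')) $ n = EE r N' $ n"
      using EE_mult[of r N'] by (simp add: mult.commute)
    have MN': "M \<le> N'" using False MN by simp
    have R: "gamma r (B - 1) (int M) = fact N' / (r 0 ^ N' * fact M) * EE r N' $ n"
      using gamma_E[of r M N', OF r0 MN'] B1 by (simp add: n_def)
    have q: "real (Suc N') * (QQ r * EE r (Suc N')) $ n = (real M + 1) * EE r N' $ n"
      using K1n[of n] MN' by (simp add: n_def of_nat_diff)
    have q': "(QQ r * EE r (Suc N')) $ n = (real M + 1) * EE r N' $ n / real (Suc N')"
      using q by (simp add: field_simps del: of_nat_Suc)
    have c: "real (2 * M + B - 1) = 2 * real M + real N' + 3" using BN by simp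
    show ?thesis unfolding S R u q' c using r0 nzf
      by (simp add: fact_Suc divide_simps del: of_nat_Suc) (simp add: algebra_simps)
  qed
  show ?thesis using A Bp by simp
qed



theorem proposition7:
  fixes Xi Z c :: real and \<rho> :: "real \<Rightarrow> real"
  defines "r \<equiv> rho_l Z c Xi \<rho>"
  assumes "Xi > 1" and "continuous_on {1..Xi} \<rho>" and "Z > 0" and "c > -1"
    and "r 0 \<noteq> 0"
  shows "(\<forall>M::int. gamma r 3 M = (if M = 0 then 1 else 0))
    \<and> (\<forall>B::nat. \<forall>M::nat. B \<ge> 4 \<and> M \<le> B - 3 \<longrightarrow>
          (\<Sum>j = 0..B-3-M. real ((M + j) choose j) * odd_dfact j * r j * gamma r B (int (M + j)))
            = gamma r (B - 1) (int M - 1)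
        \<and> (\<Sum>j = 0..<B-3-M. real ((M + 1 + j) choose (j + 1)) * odd_dfact (j + 1) * r j
              * gamma r B (int (M + 1 + j)))
            = real (2 * M + B - 1) * gamma r (B - 1) (int M))
    \<and> (\<forall>g :: nat \<Rightarrow> int \<Rightarrow> real.
          g 3 0 = 1
        \<and> (\<forall>B::nat. \<forall>M::nat. B \<ge> 4 \<and> M \<le> B - 3 \<longrightarrow>
              (\<Sum>j = 0..B-3-M. real ((M + j) choose j) * odd_dfact j * r j * g B (int (M + j)))
                = (if M = 0 then 0 else g (B - 1) (int M - 1)))
        \<longrightarrow> (\<forall>B::nat. \<forall>M::nat. B \<ge> 3 \<and> M \<le> B - 3 \<longrightarrow> g B (int M) = gamma r B (int M)))"
proof -
  have r0: "r 0 \<noteq> 0" by fact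
  have P1: "\<forall>M::int. gamma r 3 M = (if M = 0 then 1 else 0)"
    by (auto simp: gamma_def bell_poly_def)
  have P2: "\<forall>B::nat. \<forall>M::nat. B \<ge> 4 \<and> M \<le> B - 3 \<longrightarrow>
          (\<Sum>j = 0..B-3-M. real ((M + j) choose j) * odd_dfact j * r j * gamma r B (int (M + j)))
            = gamma r (B - 1) (int M - 1)
        \<and> (\<Sum>j = 0..<B-3-M. real ((M + 1 + j) choose (j + 1)) * odd_dfact (j + 1) * r j
              * gamma r B (int (M + 1 + j)))
            = real (2 * M + B - 1) * gamma r (B - 1) (int M)"
    using main_ids[of r, OF r0] by blast
  have P3: "g B (int M) = gamma r B (int M)"
    if g3: "g 3 0 = 1"
      and geq: "\<forall>B::nat. \<forall>M::nat. B \<ge> 4 \<and> M \<le> B - 3 \<longrightarrow>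
              (\<Sum>j = 0..B-3-M. real ((M + j) choose j) * odd_dfact j * r j * g B (int (M + j)))
                = (if M = 0 then 0 else g (B - 1) (int M - 1))"
      and BM: "B \<ge> 3" "M \<le> B - 3"
    for g :: "nat \<Rightarrow> int \<Rightarrow> real" and B M
  proof -
    have main: "\<forall>M \<le> N. g (N+3) (int M) = gamma r (N+3) (int M)" for N
    proof (induction N)
      case 0
      then show ?case using g3 P1 by simp
    next
      case (Suc N)
      define B' where "B' = Suc N + 3"
      have B'4: "B' \<ge> 4" and B'1: "B' - 1 = N + 3" and B'3: "B' - 3 = Suc N" by (simp_all add: B'_def)
      have "g B' (int M) = gamma r B' (int M)" if "M \<le> Suc N" for M
        using that
      proof (induction "Suc N - M" arbitrary: M rule: less_induct)
        case less
        have MB': "M \<le> B' - 3" using less.prems B'3 by simp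
        define f where "f = (\<lambda>h j. real ((M + j) choose j) * odd_dfact j * r j * h B' (int (M + j)))"
        have eg: "(\<Sum>j = 0..B'-3-M. f g j) = (if M = 0 then 0 else g (B' - 1) (int M - 1))"
          using geq B'4 MB' unfolding f_def by blast
        have egam: "(\<Sum>j = 0..B'-3-M. f (gamma r) j) = gamma r (B' - 1) (int M - 1)"
          using P2 B'4 MB' unfolding f_def by blast
        have rhs: "(if M = 0 then 0 else g (B' - 1) (int M - 1)) = gamma r (B' - 1) (int M - 1)"
        proof (cases M)
          case 0 then show ?thesis by (simp add: gamma_def)
        next
          case (Suc M')
          have "M' \<le> N" using less.prems Suc by simp
          then show ?thesis using Suc.IH Suc B'1 by simp
        qed
        have tail: "(\<Sum>j = Suc 0..B'-3-M. f g j) = (\<Sum>j = Suc 0..B'-3-M. f (gamma r) j)"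
        proof (intro sum.cong refl)
          fix j assume j: "j \<in> {Suc 0..B'-3-M}"
          have "Suc N - (M + j) < Suc N - M" "M + j \<le> Suc N" using j B'3 less.prems by auto
          then have "g B' (int (M + j)) = gamma r B' (int (M + j))" using less.hyps by blast
          then show "f g j = f (gamma r) j" by (simp add: f_def)
        qed
        have "f g 0 + (\<Sum>j = Suc 0..B'-3-M. f g j) = f (gamma r) 0 + (\<Sum>j = Suc 0..B'-3-M. f (gamma r) j)"
          using eg egam rhs by (simp add: sum.atLeast_Suc_atMost[symmetric])
        then have "f g 0 = f (gamma r) 0" using tail by simp
        then show ?case using r0 by (simp add: f_def)
      qed
      then show ?case by (simp add: B'_def)
    qed
    have "B = (B - 3) + 3" using BM by simp
    then show ?thesis using main[of "B - 3"] BM by metis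
  qed
  show ?thesis using P1 P2 P3 by blast
qed

end
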